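(* Let three circular arcs meet at a point $X$, forming angles of $2\pi/3$ with each other there, let $C_1,C_2,C_3$ be their centers of curvature and $r_i=|XC_i|$ their radii. Then the following are equivalent: (1) the sum of the three signed curvatures of the arcs at $X$ is zero; (2) the three points $C_1,C_2,C_3$ are collinear; (3) the three circles with centers $C_i$ and radii $r_i$ have two triple crossing points (two distinct points lying on all three circles).
   Context: Signed curvature: for a circular arc of curvature $c\ge 0$ ending at a point $X$, its signed curvature at $X$ is $c$ if the arc curves clockwise as it leaves $X$ and $-c$ if it curves counterclockwise. *)

theory Defs
  imports "HOL-Analysis.Analysis"
begin

text \<open>A circular arc ending at the point X of the plane (complex numbers) is described by
  its unit tangent direction t at X (pointing away from X along the arc), its curvature
  c > 0 and a flag cw saying whether the arc curves clockwise (True) or counterclockwise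
  (False) as it leaves X.\<close>

definition signed_curvature :: "real \<Rightarrow> bool \<Rightarrow> real" where
  "signed_curvature c cw = (if cw then c else - c)"

definition curvature_center :: "complex \<Rightarrow> complex \<Rightarrow> real \<Rightarrow> bool \<Rightarrow> complex" where
  "curvature_center X t c cw = X + (if cw then - \<i> else \<i>) * t / complex_of_real c"

end

theory Submission
  imports Defs
begin
lemma det_iff: "(x::complex) = 0 \<or> y = 0 \<or> (\<exists>c. y = c *\<^sub>R x) \<longleftrightarrow> Re x * Im y = Im x * Re y"
proof
  assume "x = 0 \<or> y = 0 \<or> (\<exists>c. y = c *\<^sub>R x)" then show "Re x * Im y = Im x * Re y" by auto
next
  assume h: "Re x * Im y = Im x * Re y"
  show "x = 0 \<or> y = 0 \<or> (\<exists>c. y = c *\<^sub>R x)"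
  proof (cases "x = 0")
    case False
    then have n: "Re x ^ 2 + Im x ^ 2 \<noteq> 0" using complex_eq_0 by auto
    define c where "c = (Re x * Re y + Im x * Im y) / (Re x ^ 2 + Im x ^ 2)"
    have "y = c *\<^sub>R x"
    proof (rule complex_eqI)
      show "Re y = Re (c *\<^sub>R x)" using n h unfolding c_def
        by (simp add: field_simps power2_eq_square) 
      show "Im y = Im (c *\<^sub>R x)" using n h unfolding c_def
        by (simp add: field_simps power2_eq_square)
    qed
    then show ?thesis by blast
  qed simp
qed

lemma col_iff: "collinear {a, b, c::complex} \<longleftrightarrow>
   (Re a - Re b) * (Im c - Im b) = (Im a - Im b) * (Re c - Re b)"
proof -
  have "collinear {a, b, c} \<longleftrightarrow> collinear {0, a - b, c - b}"
    by (auto simp add: collinear_def)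
  also have "\<dots> \<longleftrightarrow> Re (a - b) * Im (c - b) = Im (a - b) * Re (c - b)"
    by (simp only: collinear_lemma det_iff)
  finally show ?thesis by simp
qed

lemma perp:
  fixes x2 y2 x3 y3 n1 n2 :: real
  assumes "x2 * n1 + y2 * n2 = 0" "x3 * n1 + y3 * n2 = 0" "n1 \<noteq> 0 \<or> n2 \<noteq> 0"
  shows "x2 * y3 = y2 * x3"
proof -
  have "(x2 * y3 - y2 * x3) * n1 = y3 * (x2 * n1 + y2 * n2) - y2 * (x3 * n1 + y3 * n2)"
    by (simp add: algebra_simps)
  also have "\<dots> = 0" using assms by simp
  finally have 1: "(x2 * y3 - y2 * x3) * n1 = 0" .
  have "(x2 * y3 - y2 * x3) * n2 = x2 * (x3 * n1 + y3 * n2) - x3 * (x2 * n1 + y2 * n2)"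
    by (simp add: algebra_simps)
  also have "\<dots> = 0" using assms by simp
  finally have 2: "(x2 * y3 - y2 * x3) * n2 = 0" .
  show ?thesis using 1 2 assms(3) by auto
qed

lemma equidist_col:
  fixes A B C p q :: complex
  assumes "p \<noteq> q" "norm (A - p) = norm (A - q)" "norm (B - p) = norm (B - q)"
    "norm (C - p) = norm (C - q)"
  shows "collinear {A, B, C}"
proof -
  have sq: "(Re z - Re p)^2 + (Im z - Im p)^2 = (Re z - Re q)^2 + (Im z - Im q)^2"
    if "norm (z - p) = norm (z - q)" for z
  proof -
    have "norm (z - p) ^ 2 = norm (z - q) ^ 2" using that by simp
    then show ?thesis by (simp add: cmod_power2)
  qed
  have lin: "2 * Re z * (Re q - Re p) + 2 * Im z * (Im q - Im p) = Re q ^2 + Im q^2 - Re p^2 - Im p^2"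
    if "norm (z - p) = norm (z - q)" for z
    using sq[OF that] by (simp add: power2_eq_square algebra_simps)
  have n: "Re q - Re p \<noteq> 0 \<or> Im q - Im p \<noteq> 0" using assms(1) complex_eqI by force
  have "(Re A - Re B) * (Im C - Im B) = (Im A - Im B) * (Re C - Re B)"
    apply (rule perp[OF _ _ n])
    using lin[OF assms(2)] lin[OF assms(3)] lin[OF assms(4)] by (simp_all add: algebra_simps)
  then show ?thesis by (simp add: col_iff)
qed

lemma reflect:
  fixes A B C X :: complex
  assumes nc: "\<not> collinear {A, X, B}" and col: "collinear {A, B, C}"
  shows "\<exists>q. q \<noteq> X \<and> norm (A - q) = norm (A - X) \<and> norm (B - q) = norm (B - X)
     \<and> norm (C - q) = norm (C - X)"
proof -
  define d where "d = B - A"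
  have "A \<noteq> B" using nc by (metis collinear_2 insert_absorb2 insert_commute)
  then have d0: "d \<noteq> 0" "cnj d \<noteq> 0" unfolding d_def by auto
  have c0: "collinear {0, B - A, C - A}" using col by (auto simp add: collinear_def)
  obtain l where l: "C = A + of_real l * d"
  proof -
    have "B - A = 0 \<or> C - A = 0 \<or> (\<exists>c. C - A = c *\<^sub>R (B - A))"
      using c0 by (simp add: collinear_lemma)
    then show ?thesis using that[of 0] that d0 unfolding d_def scaleR_conv_of_real
      by (auto simp del: of_real_mult) (metis add.commute diff_eq_eq)
  qed
  define q where "q = A + (d / cnj d) * cnj (X - A)"
  have key: "norm ((A + of_real m * d) - q) = norm ((A + of_real m * d) - X)" for m
  proof -
    have "q - (A + of_real m * d) = (d / cnj d) * cnj (X - (A + of_real m * d))"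
      unfolding q_def using d0 by (simp add: field_simps)
    then have "norm (q - (A + of_real m * d)) = norm (d / cnj d) * norm (cnj (X - (A + of_real m * d)))"
      by (simp only: norm_mult)
    also have "\<dots> = norm (X - (A + of_real m * d))" using d0 by (simp add: norm_divide del: complex_cnj_diff complex_cnj_add complex_cnj_mult)
    finally have "norm (q - (A + of_real m * d)) = norm (X - (A + of_real m * d))" .
    then show ?thesis by (simp add: norm_minus_commute)
  qed
  have "q \<noteq> X"
  proof
    assume "q = X"
    then have "X - A = (d / cnj d) * cnj (X - A)" unfolding q_def by (metis add_diff_cancel_left')
    then have "(X - A) * cnj d = d * cnj (X - A)" using d0 by (simp add: field_simps)
    then have "Im ((X - A) * cnj d) = Im (d * cnj (X - A))" by simp
    then have "(Re A - Re X) * (Im B - Im X) = (Im A - Im X) * (Re B - Re X)"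
      unfolding d_def by (simp add: algebra_simps)
    then show False using nc by (simp add: col_iff)
  qed
  moreover have "norm (A - q) = norm (A - X)" using key[of 0] by simp
  moreover have "norm (B - q) = norm (B - X)" using key[of 1] by (simp add: d_def)
  moreover have "norm (C - q) = norm (C - X)" using key[of l] l by simp
  ultimately show ?thesis by blast
qed

lemma center_eq: "c > 0 \<Longrightarrow> curvature_center X t c cw = X - \<i> * t / complex_of_real (signed_curvature c cw)"
  by (simp add: curvature_center_def signed_curvature_def)

lemma sc_nz: "c > 0 \<Longrightarrow> signed_curvature c cw \<noteq> 0"
  by (simp add: signed_curvature_def)

lemma center_re: "Re (X - \<i> * t / complex_of_real k) = Re X + Im t / k"
  by (simp add: Re_divide_of_real)
lemma center_im: "Im (X - \<i> * t / complex_of_real k) = Im X - Re t / k"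
  by (simp add: Im_divide_of_real)

theorem lemma2:
  fixes X t1 t2 t3 :: complex and c1 c2 c3 :: real and cw1 cw2 cw3 :: bool
  assumes unit: "norm t1 = 1" "norm t2 = 1" "norm t3 = 1"
    and angles: "t1 \<bullet> t2 = cos (2 * pi / 3)" "t2 \<bullet> t3 = cos (2 * pi / 3)"
                "t1 \<bullet> t3 = cos (2 * pi / 3)"
    and pos: "c1 > 0" "c2 > 0" "c3 > 0"
  defines "C1 \<equiv> curvature_center X t1 c1 cw1"
      and "C2 \<equiv> curvature_center X t2 c2 cw2"
      and "C3 \<equiv> curvature_center X t3 c3 cw3"
  defines "r1 \<equiv> dist X C1" and "r2 \<equiv> dist X C2" and "r3 \<equiv> dist X C3"
  shows "(signed_curvature c1 cw1 + signed_curvature c2 cw2 + signed_curvature c3 cw3 = 0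
            \<longleftrightarrow> collinear {C1, C2, C3})
       \<and> (collinear {C1, C2, C3}
            \<longleftrightarrow> (\<exists>p q. p \<noteq> q \<and> p \<in> sphere C1 r1 \<inter> sphere C2 r2 \<inter> sphere C3 r3
                        \<and> q \<in> sphere C1 r1 \<inter> sphere C2 r2 \<inter> sphere C3 r3))"
proof -
  define k1 where "k1 = signed_curvature c1 cw1"
  define k2 where "k2 = signed_curvature c2 cw2"
  define k3 where "k3 = signed_curvature c3 cw3"
  have k0: "k1 \<noteq> 0" "k2 \<noteq> 0" "k3 \<noteq> 0" using pos sc_nz unfolding k1_def k2_def k3_def by auto
  define a1 where "a1 = Re t1" define b1 where "b1 = Im t1"
  define a2 where "a2 = Re t2" define b2 where "b2 = Im t2"
  define a3 where "a3 = Re t3" define b3 where "b3 = Im t3"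
  have nrm: "a1^2 + b1^2 = 1" "a2^2 + b2^2 = 1" "a3^2 + b3^2 = 1"
    using unit unfolding a1_def b1_def a2_def b2_def a3_def b3_def
    by (simp_all add: cmod_def)
  have inn: "a1*a2 + b1*b2 = -1/2" "a2*a3 + b2*b3 = -1/2" "a1*a3 + b1*b3 = -1/2"
    using angles unfolding a1_def b1_def a2_def b2_def a3_def b3_def
    by (simp_all add: inner_complex_def cos_120)
  have "(a1+a2+a3)^2 + (b1+b2+b3)^2 = (a1^2 + b1^2) + (a2^2 + b2^2) + (a3^2 + b3^2)
     + 2 * (a1*a2 + b1*b2) + 2 * (a2*a3 + b2*b3) + 2 * (a1*a3 + b1*b3)"
    by (simp add: power2_eq_square algebra_simps)
  also have "\<dots> = 0" using nrm inn by simp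
  finally have "(a1+a2+a3)^2 + (b1+b2+b3)^2 = 0" .
  then have s: "a3 = - a1 - a2" "b3 = - b1 - b2"
    by (simp_all add: sum_power2_eq_zero_iff)
  define D where "D = a1 * b2 - b1 * a2"
  have "D^2 = (a1^2 + b1^2) * (a2^2 + b2^2) - (a1*a2 + b1*b2)^2"
    unfolding D_def by (simp add: power2_eq_square algebra_simps)
  then have "D^2 = 3/4" using nrm inn by (simp add: power2_eq_square)
  then have D0: "D \<noteq> 0" by auto
  have C1: "Re C1 = Re X + b1 / k1" "Im C1 = Im X - a1 / k1"
    unfolding C1_def center_eq[OF pos(1)] k1_def a1_def b1_def center_re center_im by simp_all
  have C2: "Re C2 = Re X + b2 / k2" "Im C2 = Im X - a2 / k2"
    unfolding C2_def center_eq[OF pos(2)] k2_def a2_def b2_def center_re center_im by simp_all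
  have C3: "Re C3 = Re X + b3 / k3" "Im C3 = Im X - a3 / k3"
    unfolding C3_def center_eq[OF pos(3)] k3_def a3_def b3_def center_re center_im by simp_all
  have E: "((Re C1 - Re C2) * (Im C3 - Im C2) - (Im C1 - Im C2) * (Re C3 - Re C2)) * (k1 * k2 * k3)
      = - D * (k1 + k2 + k3)"
    unfolding C1 C2 C3 s D_def using k0 by (simp add: field_simps)
  have part1: "k1 + k2 + k3 = 0 \<longleftrightarrow> collinear {C1, C2, C3}"
  proof -
    have "collinear {C1, C2, C3} \<longleftrightarrow>
      ((Re C1 - Re C2) * (Im C3 - Im C2) - (Im C1 - Im C2) * (Re C3 - Re C2)) * (k1 * k2 * k3) = 0"
      using k0 by (simp add: col_iff)
    then show ?thesis using E D0 by simp
  qed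
  have nc: "\<not> collinear {C1, X, C2}"
  proof
    assume "collinear {C1, X, C2}"
    then have "(Re C1 - Re X) * (Im C2 - Im X) = (Im C1 - Im X) * (Re C2 - Re X)"
      by (simp add: col_iff)
    then have "(b1 / k1) * (- a2 / k2) = (- a1 / k1) * (b2 / k2)" unfolding C1 C2 by simp
    then have "D / (k1 * k2) = 0" unfolding D_def by (simp add: field_simps) (metis mult.commute)
    then show False using D0 k0 by simp
  qed
  have part2: "collinear {C1, C2, C3}
            \<longleftrightarrow> (\<exists>p q. p \<noteq> q \<and> p \<in> sphere C1 r1 \<inter> sphere C2 r2 \<inter> sphere C3 r3
                        \<and> q \<in> sphere C1 r1 \<inter> sphere C2 r2 \<inter> sphere C3 r3)"
  proof
    assume "collinear {C1, C2, C3}"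
    then obtain q where q: "q \<noteq> X" "norm (C1 - q) = norm (C1 - X)" "norm (C2 - q) = norm (C2 - X)"
      "norm (C3 - q) = norm (C3 - X)" using reflect[OF nc] by blast
    have "X \<in> sphere C1 r1 \<inter> sphere C2 r2 \<inter> sphere C3 r3"
      unfolding r1_def r2_def r3_def by (simp add: dist_commute)
    moreover have "q \<in> sphere C1 r1 \<inter> sphere C2 r2 \<inter> sphere C3 r3"
      using q unfolding r1_def r2_def r3_def by (simp add: dist_norm norm_minus_commute)
    ultimately show "\<exists>p q. p \<noteq> q \<and> p \<in> sphere C1 r1 \<inter> sphere C2 r2 \<inter> sphere C3 r3
                        \<and> q \<in> sphere C1 r1 \<inter> sphere C2 r2 \<inter> sphere C3 r3"
      using q(1) by blast
  next
    assume "\<exists>p q. p \<noteq> q \<and> p \<in> sphere C1 r1 \<inter> sphere C2 r2 \<inter> sphere C3 r3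
                        \<and> q \<in> sphere C1 r1 \<inter> sphere C2 r2 \<inter> sphere C3 r3"
    then obtain p q where pq: "p \<noteq> q" "p \<in> sphere C1 r1 \<inter> sphere C2 r2 \<inter> sphere C3 r3"
      "q \<in> sphere C1 r1 \<inter> sphere C2 r2 \<inter> sphere C3 r3" by blast
    show "collinear {C1, C2, C3}"
      apply (rule equidist_col[OF pq(1)])
      using pq(2,3) by (simp_all add: dist_norm)
  qed
  show ?thesis using part1 part2 unfolding k1_def k2_def k3_def by blast
qed
end
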